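(* In the setting of the mirror triangle method with inexact $(\delta,L)$-oracle (see context), for every step $k\ge0$ performed by the method and every $x\in Q$, $$A_{k+1}F(x_{k+1})-A_kF(x_k)+V(x,u_{k+1})-V(x,u_k)\le\alpha_{k+1}F(x)+2\delta A_{k+1}.$$
   Context: $\mathbb{R}^n$ carries a norm $\|\cdot\|$ with dual norm $\|\lambda\|_*=\max_{\|\nu\|\le1}\langle\lambda,\nu\rangle$; $Q$ closed convex; $f:Q\to\mathbb{R}$ convex continuous, differentiable with $L$-Lipschitz gradient ($\|\nabla f(x)-\nabla f(y)\|_*\le L\|x-y\|$); $h$ convex on $Q$; $F=f+h$. Prox-function $d$: continuously differentiable, $1$-strongly convex w.r.t. $\|\cdot\|$; $V(x,y)=d(x)-d(y)-\langle\nabla d(y),x-y\rangle$. A $(\delta,L)$-oracle returns for query $y\in Q$ a pair $(f_\delta(y),\nabla f_\delta(y))$ with $0\le f(x)-f_\delta(y)-\langle\nabla f_\delta(y),x-y\rangle\le\frac L2\|x-y\|^2+\delta$ for all $x\in Q$. Method (with $x_0\in Q$, $0<L_0\le L$): $y_0=u_0=x_0$, $L_1=L_0/2$, $\alpha_0=A_0=0$. Step $k+1$ with current $L_{k+1}$: (i) $\alpha_{k+1}$ is the largest root of $A_k+\alpha=L_{k+1}\alpha^2$, $A_{k+1}=A_k+\alpha_{k+1}$; (ii) $y_{k+1}=(\alpha_{k+1}u_k+A_kx_k)/A_{k+1}$; (iii) $u_{k+1}=\arg\min_{x\in Q}\{V(x,u_k)+\alpha_{k+1}(f_\delta(y_{k+1})+\langle\nabla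 f_\delta(y_{k+1}),x-y_{k+1}\rangle+h(x))\}$; (iv) $x_{k+1}=(\alpha_{k+1}u_{k+1}+A_kx_k)/A_{k+1}$; (v) if $f_\delta(x_{k+1})\le f_\delta(y_{k+1})+\langle\nabla f_\delta(y_{k+1}),x_{k+1}-y_{k+1}\rangle+\frac{L_{k+1}}2\|x_{k+1}-y_{k+1}\|^2+\delta$, set $L_{k+2}=L_{k+1}/2$ and go to the next step; otherwise replace $L_{k+1}$ by $2L_{k+1}$ and repeat step $k+1$. *)

theory Defs
  imports "HOL-Analysis.Analysis"
begin

definition is_norm :: "('a::real_vector \<Rightarrow> real) \<Rightarrow> bool" where
  "is_norm nrm \<longleftrightarrow>
     (\<forall>x. 0 \<le> nrm x) \<and> (\<forall>x. nrm x = 0 \<longleftrightarrow> x = 0) \<and>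
     (\<forall>c x. nrm (c *\<^sub>R x) = \<bar>c\<bar> * nrm x) \<and>
     (\<forall>x y. nrm (x + y) \<le> nrm x + nrm y)"

definition dual_norm :: "('a::real_inner \<Rightarrow> real) \<Rightarrow> 'a \<Rightarrow> real" where
  "dual_norm nrm l = Sup ((\<lambda>v. inner l v) ` {v. nrm v \<le> 1})"

definition strongly_convex_on :: "'a::real_vector set \<Rightarrow> ('a \<Rightarrow> real) \<Rightarrow> ('a \<Rightarrow> real) \<Rightarrow> bool" where
  "strongly_convex_on Q nrm d \<longleftrightarrow>
     (\<forall>x\<in>Q. \<forall>y\<in>Q. \<forall>t::real. 0 \<le> t \<and> t \<le> 1 \<longrightarrow>
        d (t *\<^sub>R x + (1 - t) *\<^sub>R y) \<le> t * d x + (1 - t) * d y - t * (1 - t) / 2 * (nrm (x - y))\<^sup>2)"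

definition bregman :: "('a::real_inner \<Rightarrow> real) \<Rightarrow> ('a \<Rightarrow> 'a) \<Rightarrow> 'a \<Rightarrow> 'a \<Rightarrow> real" where
  "bregman d gradd x y = d x - d y - inner (gradd y) (x - y)"

definition delta_L_oracle ::
  "'a::real_inner set \<Rightarrow> ('a \<Rightarrow> real) \<Rightarrow> ('a \<Rightarrow> real) \<Rightarrow> real \<Rightarrow> real \<Rightarrow> ('a \<Rightarrow> real) \<Rightarrow> ('a \<Rightarrow> 'a) \<Rightarrow> bool" where
  "delta_L_oracle Q nrm f \<delta> L fd gd \<longleftrightarrow>
     (\<forall>y\<in>Q. \<forall>x\<in>Q. 0 \<le> f x - fd y - inner (gd y) (x - y) \<and>
        f x - fd y - inner (gd y) (x - y) \<le> L / 2 * (nrm (x - y))\<^sup>2 + \<delta>)"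

definition largest_root :: "real \<Rightarrow> real \<Rightarrow> real \<Rightarrow> bool" where
  "largest_root A L \<alpha> \<longleftrightarrow> A + \<alpha> = L * \<alpha>\<^sup>2 \<and> (\<forall>\<beta>. A + \<beta> = L * \<beta>\<^sup>2 \<longrightarrow> \<beta> \<le> \<alpha>)"

end

theory Submission
  imports Defs
begin

lemma dirderiv:
  fixes d :: "'a::real_normed_vector \<Rightarrow> real"
  assumes "(d has_derivative D) (at p)"
  shows "((\<lambda>t. (d (p + t *\<^sub>R v) - d p) / t) \<longlongrightarrow> D v) (at_right 0)"
proof -
  have l: "((\<lambda>t::real. p + t *\<^sub>R v) has_derivative (\<lambda>s. s *\<^sub>R v)) (at 0)"
    by (auto intro!: derivative_eq_intros)
  have "((\<lambda>t. d (p + t *\<^sub>R v)) has_derivative (\<lambda>s. D (s *\<^sub>R v))) (at 0)"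
    using has_derivative_compose[OF l] assms by (simp add: o_def)
  moreover have "D (s *\<^sub>R v) = s * D v" for s
    using assms has_derivative_bounded_linear linear_cmul bounded_linear.linear by fastforce
  ultimately have "((\<lambda>t. d (p + t *\<^sub>R v)) has_real_derivative D v) (at 0)"
    by (simp add: has_field_derivative_def mult.commute[of _ "D v"])
  then have "((\<lambda>t. d (p + t *\<^sub>R v)) has_real_derivative D v) (at 0 within {0<..})"
    using has_field_derivative_at_within by blast
  then show ?thesis
    by (simp add: has_field_derivative_iff)
qed

lemma lim_le:
  fixes q r :: "real \<Rightarrow> real"
  assumes "(q \<longlongrightarrow> a) (at_right 0)" "(r \<longlongrightarrow> b) (at_right 0)"
    and "\<And>t. 0 < t \<Longrightarrow> t \<le> 1 \<Longrightarrow> q t \<le> r t"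
  shows "a \<le> b"
proof (rule tendsto_le[OF _ assms(2) assms(1)])
  show "at_right (0::real) \<noteq> bot" by simp
  show "\<forall>\<^sub>F t in at_right 0. q t \<le> r t"
    unfolding eventually_at_right_field
    by (rule exI[of _ 1]) (auto intro: assms(3))
qed

lemma sc_bregman:
  fixes d :: "'a::real_inner \<Rightarrow> real"
  assumes sc: "strongly_convex_on Q nrm d" and dg: "\<And>p. (d has_derivative (\<lambda>v. inner (gradd p) v)) (at p)"
    and a: "a \<in> Q" and b: "b \<in> Q"
  shows "(nrm (a - b))\<^sup>2 / 2 \<le> bregman d gradd a b"
proof -
  have q: "((\<lambda>t. (d (b + t *\<^sub>R (a - b)) - d b) / t) \<longlongrightarrow> inner (gradd b) (a - b)) (at_right 0)"
    using dirderiv[OF dg] by blast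
  have r: "((\<lambda>t::real. d a - d b - (1 - t) / 2 * (nrm (a - b))\<^sup>2) \<longlongrightarrow> d a - d b - (1 - 0) / 2 * (nrm (a - b))\<^sup>2) (at_right 0)"
    by (intro tendsto_intros) auto
  have "inner (gradd b) (a - b) \<le> d a - d b - (1 - 0) / 2 * (nrm (a - b))\<^sup>2"
  proof (rule lim_le[OF q r])
    fix t :: real assume t: "0 < t" "t \<le> 1"
    have e: "b + t *\<^sub>R (a - b) = t *\<^sub>R a + (1 - t) *\<^sub>R b" by (simp add: algebra_simps)
    have "d (b + t *\<^sub>R (a - b)) \<le> t * d a + (1 - t) * d b - t * (1 - t) / 2 * (nrm (a - b))\<^sup>2"
      using sc a b t unfolding strongly_convex_on_def e by auto
    then have "d (b + t *\<^sub>R (a - b)) - d b \<le> t * (d a - d b - (1 - t) / 2 * (nrm (a - b))\<^sup>2)"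
      by (simp add: algebra_simps)
    then show "(d (b + t *\<^sub>R (a - b)) - d b) / t \<le> d a - d b - (1 - t) / 2 * (nrm (a - b))\<^sup>2"
      using t by (simp add: divide_le_eq mult.commute)
  qed
  then show ?thesis unfolding bregman_def by simp
qed

lemma three_point:
  fixes d :: "'a::real_inner \<Rightarrow> real"
  assumes dg: "\<And>p. (d has_derivative (\<lambda>v. inner (gradd p) v)) (at p)"
    and Q: "convex Q" and psi: "convex_on Q psi" and u: "u \<in> Q" and z: "z \<in> Q"
    and opt: "\<And>w. w \<in> Q \<Longrightarrow> d u + psi u \<le> d w + psi w"
  shows "d z - d u - inner (gradd u) (z - u) \<le> (d z + psi z) - (d u + psi u)"
proof -
  have q: "((\<lambda>t. (d (u + t *\<^sub>R (z - u)) - d u) / t) \<longlongrightarrow> inner (gradd u) (z - u)) (at_right 0)"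
    using dirderiv[OF dg] by blast
  have "psi u - psi z \<le> inner (gradd u) (z - u)"
  proof (rule lim_le[OF tendsto_const q])
    fix t :: real assume t: "0 < t" "t \<le> 1"
    have e: "u + t *\<^sub>R (z - u) = (1 - t) *\<^sub>R u + t *\<^sub>R z" by (simp add: algebra_simps)
    have wq: "u + t *\<^sub>R (z - u) \<in> Q" unfolding e using Q u z t by (simp add: convexD)
    have "psi (u + t *\<^sub>R (z - u)) \<le> (1 - t) * psi u + t * psi z"
      unfolding e using convex_onD[OF psi, of t u z] u z t by auto
    moreover have "d u + psi u \<le> d (u + t *\<^sub>R (z - u)) + psi (u + t *\<^sub>R (z - u))" using opt wq .
    ultimately have "t * (psi u - psi z) \<le> d (u + t *\<^sub>R (z - u)) - d u"
      by (simp add: algebra_simps)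
    then show "psi u - psi z \<le> (d (u + t *\<^sub>R (z - u)) - d u) / t"
      using t by (simp add: le_divide_eq mult.commute)
  qed
  then show ?thesis by simp
qed

lemma affine_convex:
  fixes c :: real and g :: "'a::real_inner"
  assumes "convex S"
  shows "convex_on S (\<lambda>w. inner g w + c)"
  unfolding convex_on_def using assms
  apply (auto simp: inner_add_right algebra_simps)
  by (metis distrib_right mult_1 order_refl)

lemma root_pos:
  assumes A: "0 \<le> A" and L: "0 < L" and r: "largest_root A L a"
  shows "0 < a"
proof -
  define s where "s = sqrt (1 + 4 * L * A)"
  have s0: "0 \<le> s" using A L by (simp add: s_def)
  have s2: "s\<^sup>2 = 1 + 4 * L * A" using A L by (simp add: s_def)
  define b where "b = (1 + s) / (2 * L)"
  have bpos: "0 < b" using s0 L by (simp add: b_def)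
  have "L * b\<^sup>2 = (1 + 2 * s + s\<^sup>2) / (4 * L)" using L
    by (simp add: b_def power2_eq_square field_simps)
  also have "\<dots> = A + b" using L unfolding s2 b_def by (simp add: field_simps)
  finally have "A + b = L * b\<^sup>2" by simp
  then have "b \<le> a" using r unfolding largest_root_def by blast
  then show ?thesis using bpos by linarith
qed

lemma cc_in:
  fixes p q :: "'a::real_vector"
  assumes "convex Q" "p \<in> Q" "q \<in> Q" "0 < a" "0 \<le> B"
  shows "(1 / (a + B)) *\<^sub>R (a *\<^sub>R p + B *\<^sub>R q) \<in> Q"
proof -
  have e: "(1 / (a + B)) *\<^sub>R (a *\<^sub>R p + B *\<^sub>R q) = (a / (a + B)) *\<^sub>R p + (B / (a + B)) *\<^sub>R q"
    by (simp add: scaleR_add_right)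
  have "a / (a + B) + B / (a + B) = 1" using assms by (simp add: add_divide_distrib[symmetric])
  then show ?thesis unfolding e using assms
    by (intro convexD) auto
qed

theorem lemma4:
  fixes nrm :: "real ^ 'n \<Rightarrow> real"
    and Q :: "(real ^ 'n) set"
    and f h :: "real ^ 'n \<Rightarrow> real"
    and gradf :: "real ^ 'n \<Rightarrow> real ^ 'n"
    and d :: "real ^ 'n \<Rightarrow> real"
    and gradd :: "real ^ 'n \<Rightarrow> real ^ 'n"
    and L L0 \<delta> :: real
    and fd :: "real ^ 'n \<Rightarrow> real"
    and gd :: "real ^ 'n \<Rightarrow> real ^ 'n"
    and Lk A \<alpha> :: "nat \<Rightarrow> real"
    and x y u :: "nat \<Rightarrow> real ^ 'n"
    and k :: nat and z :: "real ^ 'n"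
  assumes norm: "is_norm nrm"
    and Q: "closed Q" "convex Q"
    and f_convex: "convex_on Q f" and f_cont: "continuous_on Q f"
    and f_grad: "\<And>p. p \<in> Q \<Longrightarrow> (f has_derivative (\<lambda>v. inner (gradf p) v)) (at p within Q)"
    and f_lip: "\<And>p q. p \<in> Q \<Longrightarrow> q \<in> Q \<Longrightarrow> dual_norm nrm (gradf p - gradf q) \<le> L * nrm (p - q)"
    and h_convex: "convex_on Q h"
    and d_grad: "\<And>p. (d has_derivative (\<lambda>v. inner (gradd p) v)) (at p)"
    and d_cont: "continuous_on UNIV gradd"
    and d_sc: "strongly_convex_on Q nrm d"
    and delta_orc: "delta_L_oracle Q nrm f \<delta> L fd gd"
    and L0: "0 < L0" "L0 \<le> L"
    and init: "x 0 \<in> Q" "y 0 = x 0" "u 0 = x 0" "Lk 0 = L0" "A 0 = 0" "\<alpha> 0 = 0"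
    and Lstep: "\<And>j. \<exists>m::nat. Lk (Suc j) = 2 ^ m * Lk j / 2"
    and alpha_step: "\<And>j. largest_root (A j) (Lk (Suc j)) (\<alpha> (Suc j))"
    and A_step: "\<And>j. A (Suc j) = A j + \<alpha> (Suc j)"
    and y_step: "\<And>j. y (Suc j) = (1 / A (Suc j)) *\<^sub>R (\<alpha> (Suc j) *\<^sub>R u j + A j *\<^sub>R x j)"
    and u_step: "\<And>j. u (Suc j) \<in> Q \<and>
        (\<forall>w\<in>Q. bregman d gradd (u (Suc j)) (u j)
                 + \<alpha> (Suc j) * (fd (y (Suc j)) + inner (gd (y (Suc j))) (u (Suc j) - y (Suc j)) + h (u (Suc j)))
               \<le> bregman d gradd w (u j)
                 + \<alpha> (Suc j) * (fd (y (Suc j)) + inner (gd (y (Suc j))) (w - y (Suc j)) + h w))"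
    and x_step: "\<And>j. x (Suc j) = (1 / A (Suc j)) *\<^sub>R (\<alpha> (Suc j) *\<^sub>R u (Suc j) + A j *\<^sub>R x j)"
    and test: "\<And>j. fd (x (Suc j)) \<le> fd (y (Suc j)) + inner (gd (y (Suc j))) (x (Suc j) - y (Suc j))
                    + Lk (Suc j) / 2 * (nrm (x (Suc j) - y (Suc j)))\<^sup>2 + \<delta>"
    and z: "z \<in> Q"
  shows "A (Suc k) * (f (x (Suc k)) + h (x (Suc k))) - A k * (f (x k) + h (x k))
           + bregman d gradd z (u (Suc k)) - bregman d gradd z (u k)
         \<le> \<alpha> (Suc k) * (f z + h z) + 2 * \<delta> * A (Suc k)"
  proof -
  have nrm0: "nrm 0 = 0" using norm unfolding is_norm_def by blast
  have nrm_scale: "\<And>c v. nrm (c *\<^sub>R v) = \<bar>c\<bar> * nrm v" using norm unfolding is_norm_def by blast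
  have Lpos: "0 < Lk j" for j
  proof (induction j)
    case 0 then show ?case using init L0 by simp
  next
    case (Suc j)
    obtain m :: nat where "Lk (Suc j) = 2 ^ m * Lk j / 2" using Lstep by blast
    moreover have "0 < 2 ^ m * Lk j" using Suc by simp
    ultimately show ?case by simp
  qed
  have Anonneg: "0 \<le> A j" for j
  proof (induction j)
    case 0 then show ?case using init by simp
  next
    case (Suc j)
    then have "0 < \<alpha> (Suc j)" using root_pos[OF _ Lpos alpha_step] by blast
    then show ?case using Suc A_step[of j] by simp
  qed
  have apos: "0 < \<alpha> (Suc j)" for j using root_pos[OF Anonneg Lpos alpha_step] .
  have xuQ: "x j \<in> Q \<and> u j \<in> Q" for j
  proof (induction j)
    case 0 then show ?case using init by simp
  next
    case (Suc j)
    have u1: "u (Suc j) \<in> Q" using u_step[of j] by (rule conjunct1)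
    have "x (Suc j) \<in> Q" unfolding x_step A_step
      using cc_in[OF Q(2) u1 conjunct1[OF Suc] apos[of j] Anonneg[of j]] by (simp add: add.commute)
    then show ?case using u1 by simp
  qed
  define a where "a = \<alpha> (Suc k)"
  define A1 where "A1 = A (Suc k)"
  define A0 where "A0 = A k"
  define u1 where "u1 = u (Suc k)"
  define u0 where "u0 = u k"
  define x1 where "x1 = x (Suc k)"
  define x0 where "x0 = x k"
  define yy where "yy = y (Suc k)"
  define g where "g = gd yy"
  define Lc where "Lc = Lk (Suc k)"
  define t where "t = a / A1"
  have a0: "0 < a" using apos a_def by simp
  have A00: "0 \<le> A0" using Anonneg A0_def by simp
  have A1e: "A1 = A0 + a" using A_step A1_def A0_def a_def by simp
  have A1p: "0 < A1" using A1e a0 A00 by simp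
  have t0: "0 \<le> t" "t \<le> 1" using a0 A00 A1e by (auto simp: t_def)
  have t1: "1 - t = A0 / A1" using A1p A1e by (simp add: t_def field_simps)
  have x0Q: "x0 \<in> Q" and u0Q: "u0 \<in> Q" using xuQ x0_def u0_def by auto
  have u1Q: "u1 \<in> Q" using xuQ u1_def by auto
  have x1Q: "x1 \<in> Q" using xuQ x1_def by auto
  have yyQ: "yy \<in> Q" unfolding yy_def y_step A_step
    using cc_in[OF Q(2) conjunct2[OF xuQ[of k]] conjunct1[OF xuQ[of k]] apos[of k] Anonneg[of k]]
    by (simp add: add.commute)
  have x1e: "x1 = (1 - t) *\<^sub>R x0 + t *\<^sub>R u1"
    unfolding x1_def x_step t1 using A1p
    by (simp add: t_def A1_def A0_def a_def u1_def x0_def scaleR_add_right add.commute)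
  have yye: "yy = (1 - t) *\<^sub>R x0 + t *\<^sub>R u0"
    unfolding yy_def y_step t1 using A1p
    by (simp add: t_def A1_def A0_def a_def u0_def x0_def scaleR_add_right add.commute)
  have dxy: "x1 - yy = t *\<^sub>R (u1 - u0)" unfolding x1e yye by (simp add: algebra_simps)
  have Lca: "Lc * a\<^sup>2 = A1" using alpha_step[of k] A1e
    unfolding largest_root_def Lc_def a_def A0_def by simp
  have orc: "\<And>yv xv. yv \<in> Q \<Longrightarrow> xv \<in> Q \<Longrightarrow> 0 \<le> f xv - fd yv - inner (gd yv) (xv - yv) \<and>
      f xv - fd yv - inner (gd yv) (xv - yv) \<le> L / 2 * (nrm (xv - yv))\<^sup>2 + \<delta>"
    using delta_orc unfolding delta_L_oracle_def by blast
  have orc1: "f x1 - fd x1 \<le> \<delta>" using orc[OF x1Q x1Q] nrm0 by simp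
  have tst: "fd x1 \<le> fd yy + inner g (x1 - yy) + Lc / 2 * (nrm (x1 - yy))\<^sup>2 + \<delta>"
    using test[of k] unfolding x1_def yy_def g_def Lc_def by simp
  have nq: "A1 * (Lc / 2 * (nrm (x1 - yy))\<^sup>2) = (nrm (u1 - u0))\<^sup>2 / 2"
  proof -
    have e: "nrm (x1 - yy) = (a / A1) * nrm (u1 - u0)" unfolding dxy nrm_scale using a0 A1p by (simp add: t_def)
    have "A1 * (Lc / 2 * ((a / A1) * nrm (u1 - u0))\<^sup>2) = (Lc * a\<^sup>2) * (nrm (u1 - u0))\<^sup>2 / (2 * A1)"
      using A1p by (simp add: power_mult_distrib power_divide power2_eq_square)
    then have "A1 * (Lc / 2 * (nrm (x1 - yy))\<^sup>2) = (Lc * a\<^sup>2) * (nrm (u1 - u0))\<^sup>2 / (2 * A1)"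
      unfolding e .
    then show ?thesis unfolding Lca using A1p by simp
  qed
  have S1: "A1 * f x1 \<le> A1 * (fd yy + inner g (x1 - yy)) + (nrm (u1 - u0))\<^sup>2 / 2 + 2 * \<delta> * A1"
  proof -
    have "f x1 \<le> fd yy + inner g (x1 - yy) + Lc / 2 * (nrm (x1 - yy))\<^sup>2 + 2 * \<delta>"
      using orc1 tst by linarith
    then have "A1 * f x1 \<le> A1 * (fd yy + inner g (x1 - yy) + Lc / 2 * (nrm (x1 - yy))\<^sup>2 + 2 * \<delta>)"
      using A1p by (simp add: mult_left_mono)
    then show ?thesis using nq by (simp add: algebra_simps)
  qed
  have S3: "A1 * (fd yy + inner g (x1 - yy)) = a * (fd yy + inner g (u1 - yy)) + A0 * (fd yy + inner g (x0 - yy))"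
  proof -
    have "x1 - yy = (1 - t) *\<^sub>R (x0 - yy) + t *\<^sub>R (u1 - yy)" unfolding x1e by (simp add: algebra_simps)
    then have "inner g (x1 - yy) = (1 - t) * inner g (x0 - yy) + t * inner g (u1 - yy)"
      by (simp add: inner_add_right)
    then have ig: "inner g (x1 - yy) = (A0 / A1) * inner g (x0 - yy) + (a / A1) * inner g (u1 - yy)"
      unfolding t1 by (simp add: t_def)
    have m: "A1 * inner g (x1 - yy) = A0 * inner g (x0 - yy) + a * inner g (u1 - yy)"
      unfolding ig using A1p by (simp add: field_simps)
    have f: "A1 * fd yy = A0 * fd yy + a * fd yy" by (simp add: A1e distrib_right)
    show ?thesis using m f by (simp add: distrib_left)
  qed
  have S4: "A1 * h x1 \<le> a * h u1 + A0 * h x0"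
  proof -
    have "h x1 \<le> (1 - t) * h x0 + t * h u1"
      unfolding x1e using convex_onD[OF h_convex, of t x0 u1] t0 x0Q u1Q by auto
    then have "A1 * h x1 \<le> A1 * ((1 - t) * h x0 + t * h u1)" using A1p by (simp add: mult_left_mono)
    also have "\<dots> = a * h u1 + A0 * h x0" unfolding t1 using A1p by (simp add: t_def field_simps)
    finally show ?thesis .
  qed
  have S5: "A0 * (fd yy + inner g (x0 - yy)) \<le> A0 * f x0"
  proof -
    have "fd yy + inner g (x0 - yy) \<le> f x0" using orc[OF yyQ x0Q] unfolding g_def by linarith
    then show ?thesis using A00 by (simp add: mult_left_mono)
  qed
  have S8: "fd yy + inner g (z - yy) \<le> f z" using orc[OF yyQ z] unfolding g_def by linarith
  have S6: "(nrm (u1 - u0))\<^sup>2 / 2 \<le> bregman d gradd u1 u0"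
    using sc_bregman[OF d_sc d_grad u1Q u0Q] .
  define c where "c = a * fd yy - a * inner g yy"
  define psi where "psi = (\<lambda>w. a * h w + (inner (a *\<^sub>R g - gradd u0) w + c))"
  have psic: "convex_on Q psi" unfolding psi_def
    using convex_on_add[OF convex_on_cmul[OF less_imp_le[OF a0] h_convex] affine_convex[OF Q(2)]] .
  have brp: "bregman d gradd w u0 + a * (fd yy + inner g (w - yy) + h w)
      = d w + psi w - d u0 + inner (gradd u0) u0" for w
    unfolding bregman_def psi_def c_def by (simp add: inner_diff_right inner_diff_left algebra_simps)
  have opt: "d u1 + psi u1 \<le> d w + psi w" if "w \<in> Q" for w
  proof -
    have "bregman d gradd u1 u0 + a * (fd yy + inner g (u1 - yy) + h u1)
        \<le> bregman d gradd w u0 + a * (fd yy + inner g (w - yy) + h w)"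
      using u_step[of k] that
      unfolding u1_def[symmetric] u0_def[symmetric] a_def[symmetric] yy_def[symmetric] g_def[symmetric]
      by blast
    then show ?thesis using brp[of w] brp[of u1] by linarith
  qed
  have tp: "d z - d u1 - inner (gradd u1) (z - u1) \<le> (d z + psi z) - (d u1 + psi u1)"
    using three_point[OF d_grad Q(2) psic u1Q z opt] by blast
  have S7: "bregman d gradd z u1 \<le> bregman d gradd z u0 + a * (fd yy + inner g (z - yy) + h z)
      - (bregman d gradd u1 u0 + a * (fd yy + inner g (u1 - yy) + h u1))"
    using tp brp[of z] brp[of u1] unfolding bregman_def[of d gradd z u1] by linarith
  have S8': "a * (fd yy + inner g (z - yy)) \<le> a * f z" using S8 a0 by (simp add: mult_left_mono)
  have "A1 * (f x1 + h x1) - A0 * (f x0 + h x0) + bregman d gradd z u1 - bregman d gradd z u0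
      \<le> a * (f z + h z) + 2 * \<delta> * A1"
  proof -
    have e1: "a * (fd yy + inner g (z - yy) + h z) = a * (fd yy + inner g (z - yy)) + a * h z"
      by (simp add: distrib_left)
    have e2: "a * (fd yy + inner g (u1 - yy) + h u1) = a * (fd yy + inner g (u1 - yy)) + a * h u1"
      by (simp add: distrib_left)
    have e3: "A1 * (f x1 + h x1) = A1 * f x1 + A1 * h x1" by (simp add: distrib_left)
    have e4: "A0 * (f x0 + h x0) = A0 * f x0 + A0 * h x0" by (simp add: distrib_left)
    have e5: "a * (f z + h z) = a * f z + a * h z" by (simp add: distrib_left)
    show ?thesis using S1 S3 S4 S5 S6 S7 S8' e1 e2 e3 e4 e5 by linarith
  qed
  then show ?thesis unfolding A1_def A0_def x1_def x0_def u1_def u0_def a_def by simp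
qed

end
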